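(* Let $(X,\varphi)$ be a Smale space and $R\subset X$ a closed rectangle. Then the maps from $(R,d)$ to $(\mathcal K(R),d_H)$ given by $x\mapsto X^s(x,R)$ and $x\mapsto X^u(x,R)$ are continuous. In particular, the maps $R\ni x\mapsto\operatorname{diam}(X^s(x,R))$ and $R\ni x\mapsto\operatorname{diam}(X^u(x,R))$ are continuous.
   Context: A Smale space $(X,\varphi)$: compact metric space $(X,d)$, homeomorphism $\varphi$, constants $\varepsilon_X>0,\lambda_X>1$ and a continuous bracket $[\cdot,\cdot]$ on $\{(x,y):d(x,y)\le\varepsilon_X\}$ with $[x,x]=x$, $[x,[y,z]]=[x,z]$, $[[x,y],z]=[x,z]$, $\varphi([x,y])=[\varphi(x),\varphi(y)]$ (whenever defined), such that $\varphi$ contracts distances by $\lambda_X^{-1}$ on local stable sets $X^s(x,\varepsilon)=\{y:d(x,y)<\varepsilon,[x,y]=y\}$ and $\varphi^{-1}$ contracts by $\lambda_X^{-1}$ on local unstable sets $X^u(x,\varepsilon)=\{y:d(x,y)<\varepsilon,[y,x]=y\}$, $0<\varepsilon\le\varepsilon_X$. Fix $\varepsilon_X'\in(0,\varepsilon_X/2]$ such that $d(x,y)\le\varepsilon_X'$ implies $d(x,[x,y]),d(y,[x,y])<\varepsilon_X/2$. A rectangle is a nonempty $R\subset X$ with $\operatorname{diam}R\le\varepsilon_X'$ and $[x,y]\in R$ for all $x,y\in R$; for $x\in R$, $X^s(x,R)=X^s(x,2\varepsilon_X')\cap R$ and $X^u(x,R)=X^u(x,2\varepsilon_X')\cap R$.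 $\mathcal K(R)$ is the set of compact subsets of $R$ and $d_H$ the Hausdorff metric on it. *)

theory Defs
  imports "HOL-Analysis.Analysis"
begin

definition hausdist :: "'a::metric_space set \<Rightarrow> 'a set \<Rightarrow> real" where
  "hausdist A B =
     (if A \<noteq> {} \<and> B \<noteq> {} \<and> bounded A \<and> bounded B
      then max (SUP a\<in>A. infdist a B) (SUP b\<in>B. infdist b A) else 0)"

definition loc_stable :: "'a::metric_space set \<Rightarrow> ('a \<Rightarrow> 'a \<Rightarrow> 'a) \<Rightarrow> 'a \<Rightarrow> real \<Rightarrow> 'a set" where
  "loc_stable X br x e = {y \<in> X. dist x y < e \<and> br x y = y}"

definition loc_unstable :: "'a::metric_space set \<Rightarrow> ('a \<Rightarrow> 'a \<Rightarrow> 'a) \<Rightarrow> 'a \<Rightarrow> real \<Rightarrow> 'a set" where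
  "loc_unstable X br x e = {y \<in> X. dist x y < e \<and> br y x = y}"

text \<open>The bracket is a total function but only its values on
  {(x,y) in X x X. d(x,y) <= eps} matter. Identities are required
  whenever all brackets involved are defined.\<close>
definition smale_space ::
  "'a::metric_space set \<Rightarrow> ('a \<Rightarrow> 'a) \<Rightarrow> ('a \<Rightarrow> 'a \<Rightarrow> 'a) \<Rightarrow> real \<Rightarrow> real \<Rightarrow> bool" where
  "smale_space X \<phi> br eps lam \<longleftrightarrow>
     compact X \<and> (\<exists>\<psi>. homeomorphism X X \<phi> \<psi>) \<and> eps > 0 \<and> lam > 1 \<and>
     (\<forall>x\<in>X. \<forall>y\<in>X. dist x y \<le> eps \<longrightarrow> br x y \<in> X) \<and>
     continuous_on {(x, y). x \<in> X \<and> y \<in> X \<and> dist x y \<le> eps} (\<lambda>(x, y). br x y) \<and>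
     (\<forall>x\<in>X. br x x = x) \<and>
     (\<forall>x\<in>X. \<forall>y\<in>X. \<forall>z\<in>X. dist y z \<le> eps \<longrightarrow> dist x (br y z) \<le> eps \<longrightarrow> dist x z \<le> eps
        \<longrightarrow> br x (br y z) = br x z) \<and>
     (\<forall>x\<in>X. \<forall>y\<in>X. \<forall>z\<in>X. dist x y \<le> eps \<longrightarrow> dist (br x y) z \<le> eps \<longrightarrow> dist x z \<le> eps
        \<longrightarrow> br (br x y) z = br x z) \<and>
     (\<forall>x\<in>X. \<forall>y\<in>X. dist x y \<le> eps \<longrightarrow> dist (\<phi> x) (\<phi> y) \<le> eps
        \<longrightarrow> \<phi> (br x y) = br (\<phi> x) (\<phi> y)) \<and>
     (\<forall>e. 0 < e \<and> e \<le> eps \<longrightarrow> (\<forall>x\<in>X. \<forall>y\<in>loc_stable X br x e. \<forall>z\<in>loc_stable X br x e.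
        dist (\<phi> y) (\<phi> z) \<le> dist y z / lam)) \<and>
     (\<forall>e. 0 < e \<and> e \<le> eps \<longrightarrow> (\<forall>x\<in>X. \<forall>y\<in>loc_unstable X br x e. \<forall>z\<in>loc_unstable X br x e.
        dist (inv_into X \<phi> y) (inv_into X \<phi> z) \<le> dist y z / lam))"

definition admissible_eps' ::
  "'a::metric_space set \<Rightarrow> ('a \<Rightarrow> 'a \<Rightarrow> 'a) \<Rightarrow> real \<Rightarrow> real \<Rightarrow> bool" where
  "admissible_eps' X br eps eps' \<longleftrightarrow> 0 < eps' \<and> eps' \<le> eps / 2 \<and>
     (\<forall>x\<in>X. \<forall>y\<in>X. dist x y \<le> eps' \<longrightarrow> dist x (br x y) < eps / 2 \<and> dist y (br x y) < eps / 2)"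

definition rectangle ::
  "'a::metric_space set \<Rightarrow> ('a \<Rightarrow> 'a \<Rightarrow> 'a) \<Rightarrow> real \<Rightarrow> 'a set \<Rightarrow> bool" where
  "rectangle X br eps' R \<longleftrightarrow> R \<subseteq> X \<and> R \<noteq> {} \<and> diameter R \<le> eps' \<and>
     (\<forall>x\<in>R. \<forall>y\<in>R. br x y \<in> R)"

definition stable_in_rect ::
  "'a::metric_space set \<Rightarrow> ('a \<Rightarrow> 'a \<Rightarrow> 'a) \<Rightarrow> real \<Rightarrow> 'a set \<Rightarrow> 'a \<Rightarrow> 'a set" where
  "stable_in_rect X br eps' R x = loc_stable X br x (2 * eps') \<inter> R"

definition unstable_in_rect ::
  "'a::metric_space set \<Rightarrow> ('a \<Rightarrow> 'a \<Rightarrow> 'a) \<Rightarrow> real \<Rightarrow> 'a set \<Rightarrow> 'a \<Rightarrow> 'a set" where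
  "unstable_in_rect X br eps' R x = loc_unstable X br x (2 * eps') \<inter> R"

end

theory Submission
  imports Defs
begin

lemma diam_le_metric:
  fixes S :: "'a::metric_space set"
  assumes "S \<noteq> {}" "\<And>x y. x \<in> S \<Longrightarrow> y \<in> S \<Longrightarrow> dist x y \<le> d"
  shows "diameter S \<le> d"
  unfolding diameter_def using assms by (auto intro!: cSUP_least)

lemma img_close:
  fixes f g :: "'b \<Rightarrow> 'a::metric_space"
  assumes close: "\<And>z. z \<in> R \<Longrightarrow> dist (f z) (g z) \<le> e" and ne: "R \<noteq> {}"
    and bf: "bounded (f`R)" and bg: "bounded (g`R)"
  shows "hausdist (f`R) (g`R) \<le> e" "diameter (f`R) \<le> diameter (g`R) + 2*e"
proof -
  have "(SUP a\<in>f`R. infdist a (g`R)) \<le> e"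
    using ne close by (auto intro!: cSUP_least infdist_le2)
  moreover have "(SUP a\<in>g`R. infdist a (f`R)) \<le> e"
    using ne close by (auto intro!: cSUP_least infdist_le2 simp: dist_commute)
  ultimately show "hausdist (f`R) (g`R) \<le> e"
    unfolding hausdist_def using ne bf bg by auto
  show "diameter (f`R) \<le> diameter (g`R) + 2*e"
  proof (rule diam_le_metric)
    show "f`R \<noteq> {}" using ne by auto
    fix a b assume "a \<in> f`R" "b \<in> f`R"
    then obtain z w where zw: "z \<in> R" "w \<in> R" "a = f z" "b = f w" by auto
    have "dist (g z) (g w) \<le> diameter (g`R)"
      using zw bg by (auto intro!: diameter_bounded_bound)
    moreover have "dist (f z) (f w) \<le> dist (f z) (g z) + dist (g z) (g w) + dist (g w) (f w)"
      by (metis add_mono dist_triangle order_trans order_refl)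
    moreover have "dist (g w) (f w) \<le> e" using close[OF zw(2)] by (simp add: dist_commute)
    ultimately have "dist (f z) (f w) \<le> diameter (g`R) + 2*e" using close[OF zw(1)] by linarith
    then show "dist a b \<le> diameter (g`R) + 2*e" using zw by simp
  qed
qed

theorem lemma6p14:
  fixes X :: "'a::metric_space set" and \<phi> :: "'a \<Rightarrow> 'a" and br :: "'a \<Rightarrow> 'a \<Rightarrow> 'a"
    and eps lam eps' :: real and R :: "'a set"
  assumes "smale_space X \<phi> br eps lam"
    and "admissible_eps' X br eps eps'"
    and "rectangle X br eps' R" and "closed R"
  shows "(\<forall>x\<in>R. compact (stable_in_rect X br eps' R x) \<and> stable_in_rect X br eps' R x \<noteq> {}) \<and>
         (\<forall>x\<in>R. \<forall>e>0. \<exists>\<delta>>0. \<forall>y\<in>R. dist x y < \<delta> \<longrightarrow>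
            hausdist (stable_in_rect X br eps' R x) (stable_in_rect X br eps' R y) < e) \<and>
         (\<forall>x\<in>R. compact (unstable_in_rect X br eps' R x) \<and> unstable_in_rect X br eps' R x \<noteq> {}) \<and>
         (\<forall>x\<in>R. \<forall>e>0. \<exists>\<delta>>0. \<forall>y\<in>R. dist x y < \<delta> \<longrightarrow>
            hausdist (unstable_in_rect X br eps' R x) (unstable_in_rect X br eps' R y) < e) \<and>
         continuous_on R (\<lambda>x. diameter (stable_in_rect X br eps' R x)) \<and>
         continuous_on R (\<lambda>x. diameter (unstable_in_rect X br eps' R x))"
proof -
  have cX: "compact X" and epspos: "eps > 0"
    and cont: "continuous_on {(x, y). x \<in> X \<and> y \<in> X \<and> dist x y \<le> eps} (\<lambda>(x, y). br x y)"
    and ax1: "\<And>x y z. x\<in>X \<Longrightarrow> y\<in>X \<Longrightarrow> z\<in>X \<Longrightarrow> dist y z \<le> eps \<Longrightarrow> dist x (br y z) \<le> eps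
        \<Longrightarrow> dist x z \<le> eps \<Longrightarrow> br x (br y z) = br x z"
    and ax2: "\<And>x y z. x\<in>X \<Longrightarrow> y\<in>X \<Longrightarrow> z\<in>X \<Longrightarrow> dist x y \<le> eps \<Longrightarrow> dist (br x y) z \<le> eps
        \<Longrightarrow> dist x z \<le> eps \<Longrightarrow> br (br x y) z = br x z"
    and brxx: "\<And>x. x \<in> X \<Longrightarrow> br x x = x"
    using assms(1) unfolding smale_space_def by blast+
  have e': "0 < eps'" "eps' \<le> eps/2" using assms(2) unfolding admissible_eps'_def by auto
  have RX: "R \<subseteq> X" and Rne: "R \<noteq> {}" and dR: "diameter R \<le> eps'"
    and Rbr: "\<And>x y. x\<in>R \<Longrightarrow> y\<in>R \<Longrightarrow> br x y \<in> R"
    using assms(3) unfolding rectangle_def by auto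
  have cR: "compact R" using compact_Int_closed[OF cX assms(4)] RX by (simp add: Int_absorb1)
  have bR: "bounded R" using cR compact_imp_bounded by auto
  have dRR: "dist x y \<le> eps'" if "x \<in> R" "y \<in> R" for x y
    using diameter_bounded_bound[OF bR that] dR by linarith
  have dRR2: "dist x y \<le> eps" if "x \<in> R" "y \<in> R" for x y
    using dRR[OF that] e' by linarith
  have "continuous_on (R \<times> R) (\<lambda>(x, y). br x y)"
    by (rule continuous_on_subset[OF cont]) (use RX dRR2 in auto)
  then have uc: "uniformly_continuous_on (R \<times> R) (\<lambda>(x, y). br x y)"
    using compact_uniformly_continuous compact_Times[OF cR cR] by blast
  have UC: "\<exists>d>0. \<forall>x\<in>R. \<forall>y\<in>R. \<forall>z\<in>R. dist x y < d \<longrightarrow>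
      dist (br x z) (br y z) < e \<and> dist (br z x) (br z y) < e" if epos: "e > 0" for e
  proof -
    obtain d where d: "d > 0" "\<forall>p\<in>R\<times>R. \<forall>q\<in>R\<times>R. dist q p < d \<longrightarrow>
        dist ((\<lambda>(x, y). br x y) q) ((\<lambda>(x, y). br x y) p) < e"
      using uc epos unfolding uniformly_continuous_on_def by blast
    show ?thesis
    proof (intro exI[of _ d] conjI ballI impI)
      fix x y z assume xyz: "x \<in> R" "y \<in> R" "z \<in> R" "dist x y < d"
      have "dist (y, z) (x, z) < d" using xyz by (simp add: dist_Pair_Pair dist_commute)
      then show "dist (br x z) (br y z) < e"
        using d(2) xyz by (metis (no_types, lifting) SigmaI case_prod_conv dist_commute)
      have "dist (z, y) (z, x) < d" using xyz by (simp add: dist_Pair_Pair dist_commute)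
      then show "dist (br z x) (br z y) < e"
        using d(2) xyz by (metis (no_types, lifting) SigmaI case_prod_conv dist_commute)
    qed (use d in auto)
  qed
  have S_eq: "stable_in_rect X br eps' R x = (\<lambda>z. br x z) ` R" if x: "x \<in> R" for x
  proof
    show "stable_in_rect X br eps' R x \<subseteq> (\<lambda>z. br x z) ` R"
      unfolding stable_in_rect_def loc_stable_def by (auto intro!: image_eqI)
    show "(\<lambda>z. br x z) ` R \<subseteq> stable_in_rect X br eps' R x"
    proof
      fix y assume "y \<in> (\<lambda>z. br x z) ` R"
      then obtain z where z: "z \<in> R" "y = br x z" by auto
      have yR: "y \<in> R" using z x Rbr by auto
      have "br x y = y" unfolding z(2)
        by (rule ax1) (use x z yR RX dRR2 in auto)
      moreover have "dist x y < 2*eps'" using dRR[OF x yR] e' by linarith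
      ultimately show "y \<in> stable_in_rect X br eps' R x"
        unfolding stable_in_rect_def loc_stable_def using yR RX by auto
    qed
  qed
  have U_eq: "unstable_in_rect X br eps' R x = (\<lambda>z. br z x) ` R" if x: "x \<in> R" for x
  proof
    show "unstable_in_rect X br eps' R x \<subseteq> (\<lambda>z. br z x) ` R"
      unfolding unstable_in_rect_def loc_unstable_def by (auto intro!: image_eqI)
    show "(\<lambda>z. br z x) ` R \<subseteq> unstable_in_rect X br eps' R x"
    proof
      fix y assume "y \<in> (\<lambda>z. br z x) ` R"
      then obtain z where z: "z \<in> R" "y = br z x" by auto
      have yR: "y \<in> R" using z x Rbr by auto
      have "br y x = y" unfolding z(2)
        by (rule ax2) (use x z yR RX dRR2 brxx in auto)
      moreover have "dist x y < 2*eps'" using dRR[OF x yR] e' by linarith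
      ultimately show "y \<in> unstable_in_rect X br eps' R x"
        unfolding unstable_in_rect_def loc_unstable_def using yR RX by auto
    qed
  qed
  have bS: "bounded ((\<lambda>z. br x z) ` R)" if "x \<in> R" for x
    using that Rbr bR by (auto intro: bounded_subset)
  have bU: "bounded ((\<lambda>z. br z x) ` R)" if "x \<in> R" for x
    using that Rbr bR by (auto intro: bounded_subset)
  have cS: "continuous_on R (\<lambda>z. br x z)" if "x \<in> R" for x
    unfolding continuous_on_iff
  proof (intro ballI allI impI)
    fix z and e :: real assume z: "z \<in> R" and e: "e > 0"
    obtain d where d: "d > 0" "\<forall>x\<in>R. \<forall>y\<in>R. \<forall>z\<in>R. dist x y < d \<longrightarrow>
      dist (br x z) (br y z) < e \<and> dist (br z x) (br z y) < e" using UC[OF e] by blast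
    show "\<exists>d>0. \<forall>z'\<in>R. dist z' z < d \<longrightarrow> dist (br x z') (br x z) < e"
      using d z that by blast
  qed
  have cU: "continuous_on R (\<lambda>z. br z x)" if "x \<in> R" for x
    unfolding continuous_on_iff
  proof (intro ballI allI impI)
    fix z and e :: real assume z: "z \<in> R" and e: "e > 0"
    obtain d where d: "d > 0" "\<forall>x\<in>R. \<forall>y\<in>R. \<forall>z\<in>R. dist x y < d \<longrightarrow>
      dist (br x z) (br y z) < e \<and> dist (br z x) (br z y) < e" using UC[OF e] by blast
    show "\<exists>d>0. \<forall>z'\<in>R. dist z' z < d \<longrightarrow> dist (br z' x) (br z x) < e"
      using d z that by blast
  qed
  have P1: "\<forall>x\<in>R. compact (stable_in_rect X br eps' R x) \<and> stable_in_rect X br eps' R x \<noteq> {}"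
  proof
    fix x assume x: "x \<in> R"
    show "compact (stable_in_rect X br eps' R x) \<and> stable_in_rect X br eps' R x \<noteq> {}"
      unfolding S_eq[OF x] using compact_continuous_image[OF cS[OF x] cR] Rne by auto
  qed
  have P3: "\<forall>x\<in>R. compact (unstable_in_rect X br eps' R x) \<and> unstable_in_rect X br eps' R x \<noteq> {}"
  proof
    fix x assume x: "x \<in> R"
    show "compact (unstable_in_rect X br eps' R x) \<and> unstable_in_rect X br eps' R x \<noteq> {}"
      unfolding U_eq[OF x] using compact_continuous_image[OF cU[OF x] cR] Rne by auto
  qed
  have P2: "\<forall>x\<in>R. \<forall>e>0. \<exists>\<delta>>0. \<forall>y\<in>R. dist x y < \<delta> \<longrightarrow>
            hausdist (stable_in_rect X br eps' R x) (stable_in_rect X br eps' R y) < e"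
  proof (intro ballI allI impI)
    fix x and e :: real assume x: "x \<in> R" and e: "e > 0"
    obtain d where d: "d > 0" "\<forall>x\<in>R. \<forall>y\<in>R. \<forall>z\<in>R. dist x y < d \<longrightarrow>
      dist (br x z) (br y z) < e/2 \<and> dist (br z x) (br z y) < e/2" using UC[of "e/2"] e by auto
    show "\<exists>\<delta>>0. \<forall>y\<in>R. dist x y < \<delta> \<longrightarrow>
            hausdist (stable_in_rect X br eps' R x) (stable_in_rect X br eps' R y) < e"
    proof (intro exI[of _ d] conjI ballI impI)
      fix y assume y: "y \<in> R" "dist x y < d"
      have "hausdist ((\<lambda>z. br x z) ` R) ((\<lambda>z. br y z) ` R) \<le> e/2"
        by (rule img_close(1)) (use d x y Rne bS in \<open>auto intro: less_imp_le\<close>)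
      then show "hausdist (stable_in_rect X br eps' R x) (stable_in_rect X br eps' R y) < e"
        using S_eq x y e by auto
    qed (use d in auto)
  qed
  have P4: "\<forall>x\<in>R. \<forall>e>0. \<exists>\<delta>>0. \<forall>y\<in>R. dist x y < \<delta> \<longrightarrow>
            hausdist (unstable_in_rect X br eps' R x) (unstable_in_rect X br eps' R y) < e"
  proof (intro ballI allI impI)
    fix x and e :: real assume x: "x \<in> R" and e: "e > 0"
    obtain d where d: "d > 0" "\<forall>x\<in>R. \<forall>y\<in>R. \<forall>z\<in>R. dist x y < d \<longrightarrow>
      dist (br x z) (br y z) < e/2 \<and> dist (br z x) (br z y) < e/2" using UC[of "e/2"] e by auto
    show "\<exists>\<delta>>0. \<forall>y\<in>R. dist x y < \<delta> \<longrightarrow>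
            hausdist (unstable_in_rect X br eps' R x) (unstable_in_rect X br eps' R y) < e"
    proof (intro exI[of _ d] conjI ballI impI)
      fix y assume y: "y \<in> R" "dist x y < d"
      have "hausdist ((\<lambda>z. br z x) ` R) ((\<lambda>z. br z y) ` R) \<le> e/2"
        by (rule img_close(1)) (use d x y Rne bU in \<open>auto intro: less_imp_le\<close>)
      then show "hausdist (unstable_in_rect X br eps' R x) (unstable_in_rect X br eps' R y) < e"
        using U_eq x y e by auto
    qed (use d in auto)
  qed
  have P5: "continuous_on R (\<lambda>x. diameter (stable_in_rect X br eps' R x))"
    unfolding continuous_on_iff
  proof (intro ballI allI impI)
    fix x and e :: real assume x: "x \<in> R" and e: "e > 0"
    obtain d where d: "d > 0" "\<forall>x\<in>R. \<forall>y\<in>R. \<forall>z\<in>R. dist x y < d \<longrightarrow>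
      dist (br x z) (br y z) < e/3 \<and> dist (br z x) (br z y) < e/3" using UC[of "e/3"] e by auto
    show "\<exists>\<delta>>0. \<forall>y\<in>R. dist y x < \<delta> \<longrightarrow>
            dist (diameter (stable_in_rect X br eps' R y)) (diameter (stable_in_rect X br eps' R x)) < e"
    proof (intro exI[of _ d] conjI ballI impI)
      fix y assume y: "y \<in> R" "dist y x < d"
      have "diameter ((\<lambda>z. br x z) ` R) \<le> diameter ((\<lambda>z. br y z) ` R) + 2*(e/3)"
        by (rule img_close(2)) (use d x y Rne bS in \<open>auto intro: less_imp_le simp: dist_commute\<close>)
      moreover have "diameter ((\<lambda>z. br y z) ` R) \<le> diameter ((\<lambda>z. br x z) ` R) + 2*(e/3)"
        by (rule img_close(2)) (use d x y Rne bS in \<open>auto intro: less_imp_le simp: dist_commute\<close>)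
      ultimately show "dist (diameter (stable_in_rect X br eps' R y)) (diameter (stable_in_rect X br eps' R x)) < e"
        using S_eq x y e by (simp add: dist_real_def abs_less_iff)
    qed (use d in auto)
  qed
  have P6: "continuous_on R (\<lambda>x. diameter (unstable_in_rect X br eps' R x))"
    unfolding continuous_on_iff
  proof (intro ballI allI impI)
    fix x and e :: real assume x: "x \<in> R" and e: "e > 0"
    obtain d where d: "d > 0" "\<forall>x\<in>R. \<forall>y\<in>R. \<forall>z\<in>R. dist x y < d \<longrightarrow>
      dist (br x z) (br y z) < e/3 \<and> dist (br z x) (br z y) < e/3" using UC[of "e/3"] e by auto
    show "\<exists>\<delta>>0. \<forall>y\<in>R. dist y x < \<delta> \<longrightarrow>
            dist (diameter (unstable_in_rect X br eps' R y)) (diameter (unstable_in_rect X br eps' R x)) < e"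
    proof (intro exI[of _ d] conjI ballI impI)
      fix y assume y: "y \<in> R" "dist y x < d"
      have "diameter ((\<lambda>z. br z x) ` R) \<le> diameter ((\<lambda>z. br z y) ` R) + 2*(e/3)"
        by (rule img_close(2)) (use d x y Rne bU in \<open>auto intro: less_imp_le simp: dist_commute\<close>)
      moreover have "diameter ((\<lambda>z. br z y) ` R) \<le> diameter ((\<lambda>z. br z x) ` R) + 2*(e/3)"
        by (rule img_close(2)) (use d x y Rne bU in \<open>auto intro: less_imp_le simp: dist_commute\<close>)
      ultimately show "dist (diameter (unstable_in_rect X br eps' R y)) (diameter (unstable_in_rect X br eps' R x)) < e"
        using U_eq x y e by (simp add: dist_real_def abs_less_iff)
    qed (use d in auto)
  qed
  show ?thesis using P1 P2 P3 P4 P5 P6 by blast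
qed

end
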